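(* Let $\mathcal B$ be a binomial class of reluctant functions with $|F(\emptyset,X)|=1$ for every finite $X$, and for integers $m,x\ge0$ let $p_m(x)=|F(S,X)|$ for any $S,X$ with $|S|=m$, $|X|=x$. Let $x$ be a positive integer, $X=\{1,\dots,x\}$, $n\ge0$, and let $z_0\le z_1\le\cdots\le z_{n-1}$ be integers in $\{1,\dots,x\}$. Then $$p_n(x)=\sum_{i=0}^{n-1}\binom ni\,p_{n-i}(x-z_i)\cdot ord(z_0,\dots,z_{i-1})\;+\;ord(z_0,\dots,z_{n-1}),$$ where $ord()=1$ for $i=0$.
   Context: For finite disjoint sets $S,X$, a reluctant function from $S$ to $X$ is a map $f:S\to S\cup X$ such that for every $s\in S$ there is a positive integer $k$ with $f^k(s)\in X$ (iterates of $f$); then $f^k(s)$ is the final image of $s$. A binomial class $\mathcal B$ assigns to each pair $(S,X)$ of finite disjoint sets a set $F(S,X)$ of reluctant functions from $S$ to $X$ such that: (i) $F$ is compatible with bijections (bijections $S\to S'$, $X\to X'$ transport $F(S,X)$ onto $F(S',X')$); (ii) for disjoint finite $X,Y$ (disjoint from $S$), the map sending a reluctant function $f$ from $S$ to $X\cup Y$ to the pair $(f_A,f_{S\setminus A})$, where $A$ is the set of $s\in S$ whose final image lies in $X$ and $f_A,f_{S\setminus A}$ are the restrictions, is a bijection from $F(S,X\cup Y)$ onto $\bigsqcup_{A\subseteq S}F(A,X)\times F(S\setminus A,Y)$. Order statistics: for $S=\{s_0,\dots,s_{m-1}\}$, $X=\{1,\dots,x\}$ and $f\in F(S,X)$, let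 $x_i$ be the final image of $s_i$ and $x_{(0)}\le\cdots\le x_{(m-1)}$ the nondecreasing rearrangement of $(x_0,\dots,x_{m-1})$. For integers $z_0\le\cdots\le z_{m-1}$ in $X$, $ord(z_0,\dots,z_{m-1})$ is the number of $f\in F(S,X)$ with $x_{(j)}\le z_j$ for all $0\le j\le m-1$ (this depends only on $m$ and the $z_j$). *)

theory Defs
  imports "HOL-Library.FuncSet"
begin

text \<open>Finite sets are modelled as finite sets of natural numbers. A function from S to
S \<union> X is an extensional function (undefined outside S).\<close>

definition reluctant :: "nat set \<Rightarrow> nat set \<Rightarrow> (nat \<Rightarrow> nat) \<Rightarrow> bool" where
  "reluctant S X f \<longleftrightarrow> f \<in> S \<rightarrow>\<^sub>E (S \<union> X) \<and> (\<forall>s\<in>S. \<exists>k>0. (f ^^ k) s \<in> X)"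

definition final_image :: "(nat \<Rightarrow> nat) \<Rightarrow> nat set \<Rightarrow> nat \<Rightarrow> nat" where
  "final_image f X s = (f ^^ (LEAST k. 0 < k \<and> (f ^^ k) s \<in> X)) s"

definition transport ::
  "(nat \<Rightarrow> nat) \<Rightarrow> (nat \<Rightarrow> nat) \<Rightarrow> nat set \<Rightarrow> nat set \<Rightarrow> (nat \<Rightarrow> nat) \<Rightarrow> (nat \<Rightarrow> nat)" where
  "transport \<sigma> \<tau> S S' f =
     restrict (\<lambda>s'. let t = f (inv_into S \<sigma> s') in if t \<in> S then \<sigma> t else \<tau> t) S'"

definition binomial_class :: "(nat set \<Rightarrow> nat set \<Rightarrow> (nat \<Rightarrow> nat) set) \<Rightarrow> bool" where
  "binomial_class F \<longleftrightarrow>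
     (\<forall>S X. finite S \<and> finite X \<and> S \<inter> X = {} \<longrightarrow> F S X \<subseteq> {f. reluctant S X f}) \<and>
     (\<forall>S X S' X' \<sigma> \<tau>. finite S \<and> finite X \<and> S \<inter> X = {} \<and> finite S' \<and> finite X' \<and> S' \<inter> X' = {}
        \<and> bij_betw \<sigma> S S' \<and> bij_betw \<tau> X X' \<longrightarrow>
        F S' X' = transport \<sigma> \<tau> S S' ` F S X) \<and>
     (\<forall>S X Y. finite S \<and> finite X \<and> finite Y \<and> S \<inter> X = {} \<and> S \<inter> Y = {} \<and> X \<inter> Y = {} \<longrightarrow>
        bij_betw
          (\<lambda>f. let A = {s\<in>S. final_image f (X \<union> Y) s \<in> X}
               in (A, restrict f A, restrict f (S - A)))
          (F S (X \<union> Y))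
          (SIGMA A:Pow S. F A X \<times> F (S - A) Y))"

text \<open>Canonical representatives: X = {1..x}, S = {x+1..x+m} with s_i = x+1+i.\<close>

definition p :: "(nat set \<Rightarrow> nat set \<Rightarrow> (nat \<Rightarrow> nat) set) \<Rightarrow> nat \<Rightarrow> nat \<Rightarrow> nat" where
  "p F m x = card (F {x+1..x+m} {1..x})"

definition ord_stat :: "(nat set \<Rightarrow> nat set \<Rightarrow> (nat \<Rightarrow> nat) set) \<Rightarrow> nat \<Rightarrow> nat list \<Rightarrow> nat" where
  "ord_stat F x zs = card {f \<in> F {x+1..x+length zs} {1..x}.
      \<forall>j<length zs. sort (map (\<lambda>i. final_image f {1..x} (x+1+i)) [0..<length zs]) ! j \<le> zs ! j}"

end

theory Submission imports Defs begin

lemma iter_sim: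
  fixes g h \<phi> :: "nat \<Rightarrow> nat"
  assumes g: "g \<in> A \<rightarrow>\<^sub>E A \<union> X" and s: "s \<in> A"
    and min: "\<And>k. 0 < k \<Longrightarrow> k < K \<Longrightarrow> (g^^k) s \<notin> X"
    and stepA: "\<And>u. u \<in> A \<Longrightarrow> g u \<in> A \<Longrightarrow> h (\<phi> u) = \<phi> (g u)"
  shows "k < K \<Longrightarrow> (g^^k) s \<in> A \<and> (h^^k) (\<phi> s) = \<phi> ((g^^k) s)"
proof (induction k)
  case 0 thus ?case using s by simp
next
  case (Suc k)
  then have IH: "(g^^k) s \<in> A" "(h^^k) (\<phi> s) = \<phi> ((g^^k) s)" by auto
  have "g ((g^^k) s) \<in> A \<union> X" using g IH(1) by (auto simp: PiE_iff)
  moreover have "(g^^Suc k) s \<notin> X" using min Suc.prems by blast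
  ultimately have "(g^^Suc k) s \<in> A" by auto
  then show ?case using stepA[OF IH(1)] IH by simp
qed

lemma fi_sim:
  fixes g h \<phi> \<psi> :: "nat \<Rightarrow> nat"
  assumes rel: "reluctant A X g" and s: "s \<in> A"
   and B: "\<phi> ` A \<subseteq> B" and BZ: "B \<inter> Z = {}" and XZ: "\<psi> ` X \<subseteq> Z"
   and stepA: "\<And>u. u \<in> A \<Longrightarrow> g u \<in> A \<Longrightarrow> h (\<phi> u) = \<phi> (g u)"
   and stepX: "\<And>u. u \<in> A \<Longrightarrow> g u \<in> X \<Longrightarrow> h (\<phi> u) = \<psi> (g u)"
  shows "final_image h Z (\<phi> s) = \<psi> (final_image g X s) \<and> final_image g X s \<in> X"
proof -
  define k0 where "k0 = (LEAST k. 0 < k \<and> (g^^k) s \<in> X)"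
  from rel s obtain k where "k>0" "(g^^k) s \<in> X" unfolding reluctant_def by blast
  hence k0: "0 < k0 \<and> (g^^k0) s \<in> X" unfolding k0_def
    by (rule LeastI[of "\<lambda>k. 0 < k \<and> (g^^k) s \<in> X" k, OF conjI])
  have min: "\<And>k. 0<k \<Longrightarrow> k<k0 \<Longrightarrow> (g^^k) s \<notin> X" using not_less_Least k0_def by blast
  have gP: "g \<in> A \<rightarrow>\<^sub>E A \<union> X" using rel unfolding reluctant_def by (rule conjunct1)
  have it: "(g^^k) s \<in> A \<and> (h^^k)(\<phi> s) = \<phi>((g^^k) s)" if "k<k0" for k
    using iter_sim[where g=g and A=A and X=X and s=s and K=k0 and h=h and \<phi>=\<phi> and k=k] gP s min stepA that by (metis (no_types))
  obtain k1 where k1: "k0 = Suc k1" using k0 by (cases k0) auto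
  have "(h^^k0)(\<phi> s) = h ((h^^k1)(\<phi> s))" using k1 by simp
  also have "\<dots> = h (\<phi> ((g^^k1) s))" using it[of k1] k1 by simp
  also have "\<dots> = \<psi> (g ((g^^k1) s))" using it[of k1] k1 stepX k0 by simp
  also have "\<dots> = \<psi> ((g^^k0) s)" using k1 by simp
  finally have last: "(h^^k0)(\<phi> s) = \<psi> ((g^^k0) s)" .
  have L: "(LEAST k. 0<k \<and> (h^^k)(\<phi> s) \<in> Z) = k0"
  proof (rule Least_equality)
    show "0 < k0 \<and> (h ^^ k0) (\<phi> s) \<in> Z" using k0 last XZ by auto
  next
    fix y assume y: "0 < y \<and> (h ^^ y) (\<phi> s) \<in> Z"
    show "k0 \<le> y"
    proof (rule ccontr)
      assume "\<not> k0 \<le> y"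
      then have "(h^^y)(\<phi> s) \<in> B" using it[of y] B by auto
      then show False using y BZ by auto
    qed
  qed
  show ?thesis unfolding final_image_def L k0_def[symmetric] using last k0 by simp
qed

lemma bc_rel: assumes "binomial_class F" "finite S" "finite X" "S \<inter> X = {}" "f \<in> F S X" shows "reluctant S X f"
proof -
  have "\<forall>S X. finite S \<and> finite X \<and> S \<inter> X = {} \<longrightarrow> F S X \<subseteq> {f. reluctant S X f}"
    using assms(1) unfolding binomial_class_def by (rule conjunct1)
  from this[rule_format] show ?thesis using assms by auto
qed

lemma bc_trans:
  assumes "binomial_class F" "finite S" "finite X" "S \<inter> X = {}" "finite S'" "finite X'" "S' \<inter> X' = {}"
    "bij_betw \<sigma> S S'" "bij_betw \<tau> X X'"
  shows "F S' X' = transport \<sigma> \<tau> S S' ` F S X"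
proof -
  have "\<forall>S X S' X' \<sigma> \<tau>. finite S \<and> finite X \<and> S \<inter> X = {} \<and> finite S' \<and> finite X' \<and> S' \<inter> X' = {}
        \<and> bij_betw \<sigma> S S' \<and> bij_betw \<tau> X X' \<longrightarrow>
        F S' X' = transport \<sigma> \<tau> S S' ` F S X" using assms(1) unfolding binomial_class_def by (rule conjunct1[OF conjunct2])
  from this[rule_format] show ?thesis using assms by auto
qed

lemma bc_dec:
  assumes "binomial_class F" "finite S" "finite X" "finite Y" "S \<inter> X = {}" "S \<inter> Y = {}" "X \<inter> Y = {}"
  shows "bij_betw
          (\<lambda>f. let A = {s\<in>S. final_image f (X \<union> Y) s \<in> X}
               in (A, restrict f A, restrict f (S - A)))
          (F S (X \<union> Y))
          (SIGMA A:Pow S. F A X \<times> F (S - A) Y)"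
proof -
  have "\<forall>S X Y. finite S \<and> finite X \<and> finite Y \<and> S \<inter> X = {} \<and> S \<inter> Y = {} \<and> X \<inter> Y = {} \<longrightarrow>
        bij_betw
          (\<lambda>f. let A = {s\<in>S. final_image f (X \<union> Y) s \<in> X}
               in (A, restrict f A, restrict f (S - A)))
          (F S (X \<union> Y))
          (SIGMA A:Pow S. F A X \<times> F (S - A) Y)" using assms(1) unfolding binomial_class_def by (rule conjunct2[OF conjunct2])
  from this[rule_format] show ?thesis using assms by auto
qed

lemma fin_F:
  assumes "binomial_class F" "finite S" "finite X" "S \<inter> X = {}"
  shows "finite (F S X)"
proof -
  have "F S X \<subseteq> S \<rightarrow>\<^sub>E (S \<union> X)" using bc_rel[OF assms] unfolding reluctant_def by blast
  moreover have "finite (S \<rightarrow>\<^sub>E (S \<union> X))" using assms by (intro finite_PiE) auto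
  ultimately show ?thesis by (rule finite_subset)
qed

lemma card_inv_le:
  assumes "binomial_class F" "finite S" "finite X" "S \<inter> X = {}" "finite S'" "finite X'" "S' \<inter> X' = {}"
    "card S = card S'" "card X = card X'"
  shows "card (F S' X') \<le> card (F S X)"
proof -
  obtain \<sigma> where \<sigma>: "bij_betw \<sigma> S S'" using finite_same_card_bij[OF assms(2,5,8)] by blast
  obtain \<tau> where \<tau>: "bij_betw \<tau> X X'" using finite_same_card_bij[OF assms(3,6,9)] by blast
  have "card (F S' X') = card (transport \<sigma> \<tau> S S' ` F S X)" using bc_trans[OF assms(1-7) \<sigma> \<tau>] by (rule arg_cong)
  also have "\<dots> \<le> card (F S X)" by (rule card_image_le[OF fin_F[OF assms(1-4)]])
  finally show ?thesis .
qed

lemma card_inv: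
  assumes "binomial_class F" "finite S" "finite X" "S \<inter> X = {}" "finite S'" "finite X'" "S' \<inter> X' = {}"
    "card S = card S'" "card X = card X'"
  shows "card (F S' X') = card (F S X)"
  using card_inv_le[OF assms] card_inv_le[OF assms(1) assms(5-7) assms(2-4)] assms(8,9) by simp

lemma p_eq:
  assumes "binomial_class F" "finite S" "finite X" "S \<inter> X = {}"
  shows "card (F S X) = p F (card S) (card X)"
proof -
  have "card (F {card X+1..card X+card S} {1..card X}) = card (F S X)" by (rule card_inv[OF assms]) auto
  then show ?thesis unfolding p_def by simp
qed

lemma fi_transport:
  assumes bc: "binomial_class F" and fin: "finite A" "finite X" "finite A'" and d: "A \<inter> X = {}" "A' \<inter> X = {}"
    and \<sigma>: "bij_betw \<sigma> A A'" and g: "g \<in> F A X" and s: "s \<in> A"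
  shows "final_image (transport \<sigma> id A A' g) X (\<sigma> s) = final_image g X s"
proof -
  have rel: "reluctant A X g" using bc_rel[OF bc fin(1,2) d(1) g] .
  have step: "transport \<sigma> id A A' g (\<sigma> u) = (if g u \<in> A then \<sigma> (g u) else g u)" if "u \<in> A" for u
  proof -
    have "\<sigma> u \<in> A'" using \<sigma> that by (rule bij_betw_apply)
    moreover have "inv_into A \<sigma> (\<sigma> u) = u" using \<sigma> that by (rule bij_betw_inv_into_left)
    ultimately show ?thesis unfolding transport_def by simp
  qed
  have "final_image (transport \<sigma> id A A' g) X (\<sigma> s) = id (final_image g X s) \<and> final_image g X s \<in> X"
  proof (rule fi_sim[OF rel s])
    show "\<sigma> ` A \<subseteq> A'" using \<sigma> bij_betw_imp_surj_on by blast
    show "A' \<inter> X = {}" by (rule d(2))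
    show "id ` X \<subseteq> X" by simp
    show "transport \<sigma> id A A' g (\<sigma> u) = \<sigma> (g u)" if "u \<in> A" "g u \<in> A" for u using step that by simp
    show "transport \<sigma> id A A' g (\<sigma> u) = id (g u)" if "u \<in> A" "g u \<in> X" for u using step that d(1) by auto
  qed
  then show ?thesis by simp
qed

definition cnt :: "(nat \<Rightarrow> nat) \<Rightarrow> nat set \<Rightarrow> nat set \<Rightarrow> nat \<Rightarrow> nat" where
  "cnt g A X c = card {s\<in>A. final_image g X s \<le> c}"

lemma cnt_transport_le:
  assumes bc: "binomial_class F" and fin: "finite A" "finite X" "finite A'" and d: "A \<inter> X = {}" "A' \<inter> X = {}"
    and c: "card A = card A'"
  shows "card {g\<in>F A' X. P (cnt g A' X)} \<le> card {g\<in>F A X. P (cnt g A X)}"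
proof -
  obtain \<sigma> where \<sigma>: "bij_betw \<sigma> A A'" using finite_same_card_bij[OF fin(1,3) c] by blast
  define T where "T = transport \<sigma> id A A'"
  have FA': "F A' X = T ` F A X" unfolding T_def using bc_trans[OF bc fin(1,2) d(1) fin(3,2) d(2) \<sigma>] by simp
  have cnteq: "cnt (T g) A' X = cnt g A X" if g: "g \<in> F A X" for g
  proof
    fix c
    have "{s'\<in>A'. final_image (T g) X s' \<le> c} = \<sigma> ` {s\<in>A. final_image g X s \<le> c}"
    proof (intro equalityI subsetI)
      fix s' assume s': "s' \<in> {s'\<in>A'. final_image (T g) X s' \<le> c}"
      define s where "s = inv_into A \<sigma> s'"
      have s: "s \<in> A" "\<sigma> s = s'" using s' \<sigma> unfolding s_def
        by (auto intro: bij_betw_inv_into_right inv_into_into simp: bij_betw_def)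
      show "s' \<in> \<sigma> ` {s\<in>A. final_image g X s \<le> c}"
        using s s' fi_transport[OF bc fin d \<sigma> g s(1)] unfolding T_def by auto
    next
      fix s' assume "s' \<in> \<sigma> ` {s\<in>A. final_image g X s \<le> c}"
      then obtain s where s: "s \<in> A" "final_image g X s \<le> c" "s' = \<sigma> s" by auto
      then show "s' \<in> {s'\<in>A'. final_image (T g) X s' \<le> c}"
        using fi_transport[OF bc fin d \<sigma> g s(1)] bij_betw_apply[OF \<sigma> s(1)] unfolding T_def by auto
    qed
    moreover have "inj_on \<sigma> {s\<in>A. final_image g X s \<le> c}"
      using \<sigma> unfolding bij_betw_def by (auto intro: inj_on_subset)
    ultimately show "cnt (T g) A' X c = cnt g A X c" unfolding cnt_def by (simp add: card_image)
  qed
  have "{g\<in>F A' X. P (cnt g A' X)} = T ` {g\<in>F A X. P (cnt g A X)}"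
  proof (intro equalityI subsetI)
    fix g' assume "g' \<in> {g\<in>F A' X. P (cnt g A' X)}"
    then obtain g where g: "g \<in> F A X" "g' = T g" "P (cnt g' A' X)" unfolding FA' by blast
    then have "P (cnt g A X)" using cnteq[OF g(1)] by simp
    then show "g' \<in> T ` {g\<in>F A X. P (cnt g A X)}" using g by blast
  next
    fix g' assume "g' \<in> T ` {g\<in>F A X. P (cnt g A X)}"
    then obtain g where g: "g \<in> F A X" "g' = T g" "P (cnt g A X)" by blast
    then have "P (cnt g' A' X)" using cnteq[OF g(1)] by simp
    then show "g' \<in> {g\<in>F A' X. P (cnt g A' X)}" using g FA' by blast
  qed
  then have "card {g\<in>F A' X. P (cnt g A' X)} = card (T ` {g\<in>F A X. P (cnt g A X)})" by (rule arg_cong)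
  also have "\<dots> \<le> card {g\<in>F A X. P (cnt g A X)}"
    by (rule card_image_le, rule finite_subset[OF _ fin_F[OF bc fin(1,2) d(1)]]) blast
  finally show ?thesis .
qed

lemma sorted_nth_le:
  "sorted ys \<Longrightarrow> j < length ys \<Longrightarrow> (ys!j \<le> (c::nat)) = (j < length (filter (\<lambda>y. y \<le> c) ys))"
proof (induction ys arbitrary: j)
  case Nil then show ?case by simp
next
  case (Cons y ys)
  show ?case
  proof (cases "y \<le> c")
    case True
    then show ?thesis using Cons by (cases j) auto
  next
    case False
    have "filter (\<lambda>y. y \<le> c) ys = []" using Cons.prems(1) False by (auto simp: filter_empty_conv)
    moreover have "y \<le> (y#ys)!j" using Cons.prems by (cases j) auto
    ultimately show ?thesis using False by simp
  qed
qed

lemma sort_cond: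
  "(\<forall>j<m. sort (map (g::nat\<Rightarrow>nat) [0..<m]) ! j \<le> zs' ! j) \<longleftrightarrow> (\<forall>j<m. j < card {i. i<m \<and> g i \<le> zs'!j})"
proof -
  have "sort (map g [0..<m]) ! j \<le> zs' ! j \<longleftrightarrow> j < card {i. i<m \<and> g i \<le> zs'!j}" if "j < m" for j
  proof -
    have "sort (map g [0..<m]) ! j \<le> zs' ! j \<longleftrightarrow> j < length (filter (\<lambda>y. y \<le> zs'!j) (sort (map g [0..<m])))"
      by (rule sorted_nth_le) (use that in auto)
    also have "length (filter (\<lambda>y. y \<le> zs'!j) (sort (map g [0..<m]))) = length (filter (\<lambda>y. y \<le> zs'!j) (map g [0..<m]))"
      by (simp add: filter_sort)
    also have "\<dots> = card {i. i < length (map g [0..<m]) \<and> map g [0..<m] ! i \<le> zs'!j}" by (rule length_filter_conv_card)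
    also have "\<dots> = card {i. i<m \<and> g i \<le> zs'!j}" by (rule arg_cong[where f=card]) auto
    finally show ?thesis .
  qed
  then show ?thesis by blast
qed

lemma card_shift: "card {i. i<m \<and> Q (x+1+i)} = card {s\<in>{x+1..x+(m::nat)}. Q s}"
proof -
  have "{s\<in>{x+1..x+m}. Q s} = (\<lambda>i. x+1+i) ` {i. i<m \<and> Q (x+1+i)}"
  proof (intro equalityI subsetI)
    fix s assume "s \<in> {s\<in>{x+1..x+m}. Q s}"
    then show "s \<in> (\<lambda>i. x+1+i) ` {i. i<m \<and> Q (x+1+i)}"
      by (auto intro!: image_eqI[where x="s - (x+1)"])
  qed auto
  then show ?thesis by (simp add: card_image inj_on_def)
qed

lemma ord_stat_cnt:
  "ord_stat F x zs' = card {f\<in>F {x+1..x+length zs'} {1..x}.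
      \<forall>j<length zs'. j < cnt f {x+1..x+length zs'} {1..x} (zs'!j)}"
proof -
  have cs: "card {i. i<m \<and> final_image f X (x+1+i) \<le> c} = card {s\<in>{x+1..x+m}. final_image f X s \<le> c}" for f X c m
    using card_shift[of m "\<lambda>s. final_image f X s \<le> c" x] by simp
  show ?thesis unfolding ord_stat_def cnt_def sort_cond cs ..
qed


lemma fi_in:
  assumes "reluctant T X f" "T \<inter> X = {}" "s \<in> T"
  shows "final_image f X s \<in> X"
proof -
  have "final_image f X (id s) = id (final_image f X s) \<and> final_image f X s \<in> X"
    by (rule fi_sim[OF assms(1,3), where B=T and Z=X]) (use assms(2) in auto)
  then show ?thesis by blast
qed

lemma cnt_mono: "finite T \<Longrightarrow> c \<le> d \<Longrightarrow> cnt f T X c \<le> cnt f T X d"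
  unfolding cnt_def by (rule card_mono) auto

lemma bij_filter_card:
  assumes "bij_betw \<Phi> G H"
  shows "card {f\<in>G. P (\<Phi> f)} = card {t\<in>H. P t}"
proof -
  have "bij_betw \<Phi> {f\<in>G. P (\<Phi> f)} {t\<in>H. P t}"
  proof (rule bij_betw_subset[OF assms])
    show "{f \<in> G. P (\<Phi> f)} \<subseteq> G" by blast
    have "\<Phi> ` G = H" using assms by (rule bij_betw_imp_surj_on)
    then show "\<Phi> ` {f \<in> G. P (\<Phi> f)} = {t \<in> H. P t}" by blast
  qed
  then show ?thesis by (rule bij_betw_same_card)
qed

lemma dec_bij:
  assumes bc: "binomial_class F" and T: "finite T" "T \<inter> {1..x} = {}" and z: "z \<le> x"
  shows "bij_betw (\<lambda>f. let A = {s\<in>T. final_image f {1..x} s \<le> z} in (A, restrict f A, restrict f (T - A)))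
           (F T {1..x}) (SIGMA A:Pow T. F A {1..z} \<times> F (T - A) {z+1..x})"
proof -
  have U: "{1..z} \<union> {z+1..x} = {1..x}" using z by auto
  have b0: "bij_betw (\<lambda>f. let A = {s\<in>T. final_image f ({1..z} \<union> {z+1..x}) s \<in> {1..z}} in (A, restrict f A, restrict f (T - A)))
           (F T ({1..z} \<union> {z+1..x})) (SIGMA A:Pow T. F A {1..z} \<times> F (T - A) {z+1..x})"
    by (rule bc_dec[OF bc T(1)]) (use T(2) z in auto)
  have eq: "{s\<in>T. final_image f {1..x} s \<in> {1..z}} = {s\<in>T. final_image f {1..x} s \<le> z}" if f: "f \<in> F T {1..x}" for f
  proof -
    have "final_image f {1..x} s \<in> {1..x}" if "s \<in> T" for s
      using fi_in[OF bc_rel[OF bc T(1) _ T(2) f] T(2) that] by simp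
    then show ?thesis by auto
  qed
  have "bij_betw (\<lambda>f. let A = {s\<in>T. final_image f {1..x} s \<in> {1..z}} in (A, restrict f A, restrict f (T - A)))
           (F T {1..x}) (SIGMA A:Pow T. F A {1..z} \<times> F (T - A) {z+1..x}) =
        bij_betw (\<lambda>f. let A = {s\<in>T. final_image f {1..x} s \<le> z} in (A, restrict f A, restrict f (T - A)))
           (F T {1..x}) (SIGMA A:Pow T. F A {1..z} \<times> F (T - A) {z+1..x})"
  proof (rule bij_betw_cong)
    fix f assume "f \<in> F T {1..x}"
    show "(let A = {s\<in>T. final_image f {1..x} s \<in> {1..z}} in (A, restrict f A, restrict f (T - A))) =
          (let A = {s\<in>T. final_image f {1..x} s \<le> z} in (A, restrict f A, restrict f (T - A)))"
      unfolding eq[OF \<open>f \<in> F T {1..x}\<close>] ..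
  qed
  then show ?thesis using b0 unfolding U by blast
qed

lemma dec_facts:
  assumes bc: "binomial_class F" and T: "finite T" "T \<inter> {1..x} = {}" and z: "z \<le> x"
    and f: "f \<in> F T {1..x}"
  defines "A \<equiv> {s\<in>T. final_image f {1..x} s \<le> z}"
  shows "restrict f A \<in> F A {1..z}" and "A \<subseteq> T"
    and "\<And>c. c \<le> z \<Longrightarrow> cnt f T {1..x} c = cnt (restrict f A) A {1..z} c"
    and "cnt f T {1..x} z = card A"
proof -
  have "(let A = {s\<in>T. final_image f {1..x} s \<le> z} in (A, restrict f A, restrict f (T - A)))
         \<in> (SIGMA A:Pow T. F A {1..z} \<times> F (T - A) {z+1..x})"
    by (rule bij_betw_apply[OF dec_bij[OF bc T z] f])
  then show g: "restrict f A \<in> F A {1..z}" unfolding A_def Let_def by simp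
  show AT: "A \<subseteq> T" unfolding A_def by blast
  have finA: "finite A" using AT T(1) finite_subset by blast
  have dA: "A \<inter> {1..z} = {}" using AT T(2) z by auto
  have relg: "reluctant A {1..z} (restrict f A)" by (rule bc_rel[OF bc finA _ dA g]) simp
  have fieq: "final_image f {1..x} s = final_image (restrict f A) {1..z} s" if s: "s \<in> A" for s
  proof -
    have "final_image f {1..x} (id s) = id (final_image (restrict f A) {1..z} s) \<and> final_image (restrict f A) {1..z} s \<in> {1..z}"
      by (rule fi_sim[OF relg s, where B=A]) (use AT T(2) z in auto)
    then show ?thesis by simp
  qed
  show "cnt f T {1..x} c = cnt (restrict f A) A {1..z} c" if c: "c \<le> z" for c
  proof -
    have "{s\<in>T. final_image f {1..x} s \<le> c} = {s\<in>A. final_image (restrict f A) {1..z} s \<le> c}"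
    proof (intro equalityI subsetI)
      fix s assume s: "s \<in> {s\<in>T. final_image f {1..x} s \<le> c}"
      then have "s \<in> A" unfolding A_def using c by auto
      then show "s \<in> {s\<in>A. final_image (restrict f A) {1..z} s \<le> c}" using s fieq by auto
    next
      fix s assume s: "s \<in> {s\<in>A. final_image (restrict f A) {1..z} s \<le> c}"
      then show "s \<in> {s\<in>T. final_image f {1..x} s \<le> c}" using fieq AT by auto
    qed
    then show ?thesis unfolding cnt_def by simp
  qed
  show "cnt f T {1..x} z = card A" unfolding cnt_def A_def ..
qed


lemma ord_dec:
  assumes bc: "binomial_class F" and one: "\<forall>X. finite X \<longrightarrow> card (F {} X) = 1"
    and z: "z \<le> x" and i: "i \<le> length zs" and zj: "\<forall>j<i. zs!j \<le> z"
  shows "ord_stat F x (take i zs) = card {g\<in>F {x+1..x+i} {1..z}. \<forall>j<i. j < cnt g {x+1..x+i} {1..z} (zs!j)}"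
proof -
  define T where "T = {x+1..x+i}"
  have T: "finite T" "T \<inter> {1..x} = {}" "card T = i" unfolding T_def by auto
  define \<Phi> where "\<Phi> = (\<lambda>f. let A = {s\<in>T. final_image f {1..x} s \<le> z} in (A, restrict f A, restrict f (T - A)))"
  have bij: "bij_betw \<Phi> (F T {1..x}) (SIGMA A:Pow T. F A {1..z} \<times> F (T - A) {z+1..x})"
    unfolding \<Phi>_def by (rule dec_bij[OF bc T(1,2) z])
  have lt: "length (take i zs) = i" using i by simp
  have os: "ord_stat F x (take i zs) = card {f\<in>F T {1..x}. \<forall>j<i. j < cnt f T {1..x} (zs!j)}"
    unfolding ord_stat_cnt lt T_def by simp
  define P' where "P' = (\<lambda>t::nat set \<times> (nat\<Rightarrow>nat) \<times> (nat\<Rightarrow>nat). fst t = T \<and> (\<forall>j<i. j < cnt (fst (snd t)) (fst t) {1..z} (zs!j)))"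
  have equiv: "(\<forall>j<i. j < cnt f T {1..x} (zs!j)) \<longleftrightarrow> P' (\<Phi> f)" if f: "f \<in> F T {1..x}" for f
  proof -
    define A where "A = {s\<in>T. final_image f {1..x} s \<le> z}"
    have AT: "A \<subseteq> T" and ce: "\<And>c. c \<le> z \<Longrightarrow> cnt f T {1..x} c = cnt (restrict f A) A {1..z} c"
      and cz: "cnt f T {1..x} z = card A"
      using dec_facts[OF bc T(1,2) z f] unfolding A_def by auto
    have PA: "P' (\<Phi> f) \<longleftrightarrow> A = T \<and> (\<forall>j<i. j < cnt (restrict f A) A {1..z} (zs!j))"
      unfolding P'_def \<Phi>_def A_def Let_def by simp
    show ?thesis
    proof
      assume R: "\<forall>j<i. j < cnt f T {1..x} (zs!j)"
      have "i \<le> card A"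
      proof (cases i)
        case 0 then show ?thesis by simp
      next
        case (Suc k)
        then have "k < cnt f T {1..x} (zs!k)" using R by simp
        also have "\<dots> \<le> cnt f T {1..x} z" by (rule cnt_mono[OF T(1)]) (use zj Suc in simp)
        finally show ?thesis using cz Suc by simp
      qed
      then have "A = T" using AT T card_mono[OF T(1) AT] by (metis card_subset_eq le_antisym)
      moreover have "\<forall>j<i. j < cnt (restrict f A) A {1..z} (zs!j)" using R ce zj by simp
      ultimately show "P' (\<Phi> f)" using PA by simp
    next
      assume "P' (\<Phi> f)"
      then have H1: "\<forall>j<i. j < cnt (restrict f A) A {1..z} (zs!j)" using PA by blast
      show "\<forall>j<i. j < cnt f T {1..x} (zs!j)"
      proof (intro allI impI)
        fix j assume "j < i"
        then show "j < cnt f T {1..x} (zs!j)" using H1 ce[of "zs!j"] zj by simp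
      qed
    qed
  qed
  have "card {f\<in>F T {1..x}. \<forall>j<i. j < cnt f T {1..x} (zs!j)} = card {f\<in>F T {1..x}. P' (\<Phi> f)}"
    using equiv by (intro arg_cong[where f=card] Collect_cong) blast
  also have "\<dots> = card {t\<in>(SIGMA A:Pow T. F A {1..z} \<times> F (T - A) {z+1..x}). P' t}"
    by (rule bij_filter_card[OF bij])
  also have "{t\<in>(SIGMA A:Pow T. F A {1..z} \<times> F (T - A) {z+1..x}). P' t}
      = (SIGMA A:{T}. {g\<in>F A {1..z}. \<forall>j<i. j < cnt g A {1..z} (zs!j)} \<times> F (T - A) {z+1..x})"
    unfolding P'_def by auto
  also have "card \<dots> = card {g\<in>F T {1..z}. \<forall>j<i. j < cnt g T {1..z} (zs!j)} * card (F {} {z+1..x})"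
  proof -
    have "finite (F T {1..z})" by (rule fin_F[OF bc T(1)]) (use T(2) z in auto)
    moreover have "finite (F {} {z+1..x})" by (rule fin_F[OF bc]) auto
    ultimately show ?thesis by (simp add: card_cartesian_product)
  qed
  also have "card (F {} {z+1..x}) = 1" using one by simp
  finally show ?thesis using os unfolding T_def by simp
qed

lemma B_count:
  assumes bc: "binomial_class F" and one: "\<forall>X. finite X \<longrightarrow> card (F {} X) = 1"
    and len: "length zs = n" and srt: "sorted zs" and rng: "\<forall>z\<in>set zs. 1 \<le> z \<and> z \<le> x" and i: "i < n"
  shows "card {f\<in>F {x+1..x+n} {1..x}. (\<forall>j<i. j < cnt f {x+1..x+n} {1..x} (zs!j)) \<and> \<not> i < cnt f {x+1..x+n} {1..x} (zs!i)}
       = (n choose i) * p F (n-i) (x - zs!i) * ord_stat F x (take i zs)"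
proof -
  define S where "S = {x+1..x+n}"
  define z where "z = zs!i"
  have S: "finite S" "S \<inter> {1..x} = {}" "card S = n" unfolding S_def by auto
  have z: "z \<le> x" unfolding z_def using rng i len nth_mem by auto
  have zj: "zs!j \<le> z" if "j \<le> i" for j unfolding z_def using sorted_nth_mono[OF srt that] i len by simp
  define \<Phi> where "\<Phi> = (\<lambda>f. let A = {s\<in>S. final_image f {1..x} s \<le> z} in (A, restrict f A, restrict f (S - A)))"
  have bij: "bij_betw \<Phi> (F S {1..x}) (SIGMA A:Pow S. F A {1..z} \<times> F (S - A) {z+1..x})"
    unfolding \<Phi>_def by (rule dec_bij[OF bc S(1,2) z])
  define P' where "P' = (\<lambda>t::nat set \<times> (nat\<Rightarrow>nat) \<times> (nat\<Rightarrow>nat). card (fst t) = i \<and> (\<forall>j<i. j < cnt (fst (snd t)) (fst t) {1..z} (zs!j)))"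
  have equiv: "((\<forall>j<i. j < cnt f S {1..x} (zs!j)) \<and> \<not> i < cnt f S {1..x} z) \<longleftrightarrow> P' (\<Phi> f)" if f: "f \<in> F S {1..x}" for f
  proof -
    define A where "A = {s\<in>S. final_image f {1..x} s \<le> z}"
    have AT: "A \<subseteq> S" and ce: "\<And>c. c \<le> z \<Longrightarrow> cnt f S {1..x} c = cnt (restrict f A) A {1..z} c"
      and cz: "cnt f S {1..x} z = card A"
      using dec_facts[OF bc S(1,2) z f] unfolding A_def by auto
    have PA: "P' (\<Phi> f) \<longleftrightarrow> card A = i \<and> (\<forall>j<i. j < cnt (restrict f A) A {1..z} (zs!j))"
      unfolding P'_def \<Phi>_def A_def Let_def by simp
    have ce': "\<forall>j<i. cnt f S {1..x} (zs!j) = cnt (restrict f A) A {1..z} (zs!j)" using ce zj by simp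
    show ?thesis
    proof
      assume R: "(\<forall>j<i. j < cnt f S {1..x} (zs!j)) \<and> \<not> i < cnt f S {1..x} z"
      have "i \<le> card A"
      proof (cases i)
        case 0 then show ?thesis by simp
      next
        case (Suc k)
        then have "k < cnt f S {1..x} (zs!k)" using R by simp
        also have "\<dots> \<le> cnt f S {1..x} z" by (rule cnt_mono[OF S(1)]) (use zj Suc in simp)
        finally show ?thesis using cz Suc by simp
      qed
      then have "card A = i" using R cz by simp
      then show "P' (\<Phi> f)" using PA R ce' by simp
    next
      assume "P' (\<Phi> f)"
      then show "(\<forall>j<i. j < cnt f S {1..x} (zs!j)) \<and> \<not> i < cnt f S {1..x} z" using PA ce' cz by simp
    qed
  qed
  define Q where "Q = (\<lambda>A. {g\<in>F A {1..z}. \<forall>j<i. j < cnt g A {1..z} (zs!j)})"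
  define \<AA> where "\<AA> = {A. A \<subseteq> S \<and> card A = i}"
  have "card {f\<in>F S {1..x}. (\<forall>j<i. j < cnt f S {1..x} (zs!j)) \<and> \<not> i < cnt f S {1..x} (zs!i)}
       = card {f\<in>F S {1..x}. P' (\<Phi> f)}"
    using equiv unfolding z_def by (intro arg_cong[where f=card] Collect_cong) blast
  also have "\<dots> = card {t\<in>(SIGMA A:Pow S. F A {1..z} \<times> F (S - A) {z+1..x}). P' t}"
    by (rule bij_filter_card[OF bij])
  also have "{t\<in>(SIGMA A:Pow S. F A {1..z} \<times> F (S - A) {z+1..x}). P' t}
      = (SIGMA A:\<AA>. Q A \<times> F (S - A) {z+1..x})"
    unfolding P'_def Q_def \<AA>_def by auto
  also have "card \<dots> = (\<Sum>A\<in>\<AA>. card (Q A \<times> F (S - A) {z+1..x}))"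
  proof (rule card_SigmaI)
    show "finite \<AA>" unfolding \<AA>_def using S(1) by simp
    show "\<forall>a\<in>\<AA>. finite (Q a \<times> F (S - a) {z + 1..x})"
    proof
      fix a assume a: "a \<in> \<AA>"
      then have "finite a" "a \<inter> {1..z} = {}" unfolding \<AA>_def using S finite_subset z by auto
      then have "finite (Q a)" unfolding Q_def using fin_F[OF bc] by simp
      moreover have "finite (F (S - a) {z + 1..x})" by (rule fin_F[OF bc]) (use S in auto)
      ultimately show "finite (Q a \<times> F (S - a) {z + 1..x})" by simp
    qed
  qed
  also have "\<dots> = (\<Sum>A\<in>\<AA>. ord_stat F x (take i zs) * p F (n-i) (x - z))"
  proof (rule sum.cong[OF refl])
    fix A assume A: "A \<in> \<AA>"
    then have AS: "A \<subseteq> S" "card A = i" unfolding \<AA>_def by auto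
    have finA: "finite A" using AS S finite_subset by blast
    have dA: "A \<inter> {1..z} = {}" using AS S z by auto
    have dT: "{x+1..x+i} \<inter> {1..z} = {}" using z by auto
    have cAT: "card A = card {x+1..x+i}" using AS by simp
    have Qeq: "card (Q A) = ord_stat F x (take i zs)"
    proof -
      have "ord_stat F x (take i zs) = card {g\<in>F {x+1..x+i} {1..z}. \<forall>j<i. j < cnt g {x+1..x+i} {1..z} (zs!j)}"
        by (rule ord_dec[OF bc one z]) (use i len zj in auto)
      moreover have "card (Q A) \<le> card {g\<in>F {x+1..x+i} {1..z}. \<forall>j<i. j < cnt g {x+1..x+i} {1..z} (zs!j)}"
        unfolding Q_def using cnt_transport_le[OF bc _ _ finA dT dA cAT[symmetric], where P="\<lambda>c. \<forall>j<i. j < c (zs!j)"] by simp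
      moreover have "card {g\<in>F {x+1..x+i} {1..z}. \<forall>j<i. j < cnt g {x+1..x+i} {1..z} (zs!j)} \<le> card (Q A)"
        unfolding Q_def using cnt_transport_le[OF bc finA _ _ dA dT cAT, where P="\<lambda>c. \<forall>j<i. j < c (zs!j)"] by simp
      ultimately show ?thesis by simp
    qed
    have peq: "card (F (S - A) {z+1..x}) = p F (n-i) (x - z)"
    proof -
      have "card (F (S - A) {z+1..x}) = p F (card (S - A)) (card {z+1..x})"
        by (rule p_eq[OF bc]) (use S in auto)
      moreover have "card (S - A) = n - i" using AS S finA by (simp add: card_Diff_subset)
      ultimately show ?thesis by simp
    qed
    show "card (Q A \<times> F (S - A) {z+1..x}) = ord_stat F x (take i zs) * p F (n-i) (x - z)"
      by (simp only: card_cartesian_product Qeq peq)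
  qed
  also have "\<dots> = (n choose i) * (ord_stat F x (take i zs) * p F (n-i) (x - z))"
  proof -
    have "card \<AA> = n choose i" unfolding \<AA>_def using n_subsets[OF S(1), of i] S(3) by simp
    then show ?thesis by simp
  qed
  finally show ?thesis unfolding z_def S_def by (simp add: ac_simps)
qed


theorem mainTheorem17:
  fixes F :: "nat set \<Rightarrow> nat set \<Rightarrow> (nat \<Rightarrow> nat) set"
    and x n :: nat and zs :: "nat list"
  assumes "binomial_class F"
    and "\<forall>X. finite X \<longrightarrow> card (F {} X) = 1"
    and "0 < x"
    and "length zs = n"
    and "sorted zs"
    and "\<forall>z\<in>set zs. 1 \<le> z \<and> z \<le> x"
  shows "p F n x = (\<Sum>i<n. (n choose i) * p F (n - i) (x - zs ! i) * ord_stat F x (take i zs))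
                   + ord_stat F x zs"
proof -
  note bc = assms(1) and one = assms(2) and len = assms(4) and srt = assms(5) and rng = assms(6)
  define S where "S = {x+1..x+n}"
  define G where "G = F S {1..x}"
  have finG: "finite G" unfolding G_def S_def by (rule fin_F[OF bc]) auto
  define Good where "Good = {f\<in>G. \<forall>j<n. j < cnt f S {1..x} (zs!j)}"
  define B where "B = (\<lambda>i. {f\<in>G. (\<forall>j<i. j < cnt f S {1..x} (zs!j)) \<and> \<not> i < cnt f S {1..x} (zs!i)})"
  have GU: "G = Good \<union> (\<Union>i\<in>{..<n}. B i)"
  proof (intro equalityI subsetI)
    fix f assume f: "f \<in> G"
    show "f \<in> Good \<union> (\<Union>i\<in>{..<n}. B i)"
    proof (cases "\<forall>j<n. j < cnt f S {1..x} (zs!j)")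
      case True then show ?thesis using f unfolding Good_def by blast
    next
      case False
      then have ex: "\<exists>j. j < n \<and> \<not> j < cnt f S {1..x} (zs!j)" by blast
      define i where "i = (LEAST j. j < n \<and> \<not> j < cnt f S {1..x} (zs!j))"
      have i: "i < n \<and> \<not> i < cnt f S {1..x} (zs!i)" unfolding i_def by (rule LeastI_ex[OF ex])
      have "j < cnt f S {1..x} (zs!j)" if "j < i" for j
      proof -
        have "\<not> (j < n \<and> \<not> j < cnt f S {1..x} (zs!j))" unfolding i_def
          by (rule not_less_Least) (use that i_def in simp)
        then show ?thesis using that i by simp
      qed
      then have "f \<in> B i" using f i unfolding B_def by blast
      then show ?thesis using i by blast
    qed
  qed (auto simp: Good_def B_def)
  have finB: "finite (B i)" for i unfolding B_def using finG by simp
  have dB: "B i \<inter> B k = {}" if "i < k" for i k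
    using that unfolding B_def by auto
  have "card G = card Good + card (\<Union>i\<in>{..<n}. B i)"
  proof -
    have "Good \<inter> (\<Union>i\<in>{..<n}. B i) = {}" unfolding Good_def B_def by auto
    moreover have "finite Good" unfolding Good_def using finG by simp
    moreover have "finite (\<Union>i\<in>{..<n}. B i)" using finB by simp
    ultimately show ?thesis unfolding GU by (rule card_Un_disjoint[rotated 2])
  qed
  also have "card (\<Union>i\<in>{..<n}. B i) = (\<Sum>i<n. card (B i))"
  proof (rule card_UN_disjoint)
    show "\<forall>i\<in>{..<n}. \<forall>j\<in>{..<n}. i \<noteq> j \<longrightarrow> B i \<inter> B j = {}"
      using dB by (metis Int_commute linorder_neqE_nat)
  qed (use finB in auto)
  also have "(\<Sum>i<n. card (B i)) = (\<Sum>i<n. (n choose i) * p F (n - i) (x - zs ! i) * ord_stat F x (take i zs))"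
  proof (rule sum.cong[OF refl])
    fix i assume "i \<in> {..<n}"
    then show "card (B i) = (n choose i) * p F (n - i) (x - zs ! i) * ord_stat F x (take i zs)"
      unfolding B_def G_def S_def using B_count[OF bc one len srt rng] by simp
  qed
  also have "card Good = ord_stat F x zs"
    unfolding Good_def G_def S_def ord_stat_cnt len ..
  finally show ?thesis unfolding p_def G_def S_def by simp
qed

end
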